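(* Let $G$ be a non-abelian subgroup of $\mathcal{H}(n,\mathbb{C})$ with $\Lambda_G\not\subset\mathbb{R}$ and $G\subset\mathcal{SR}_n$. Then $G$ has a dense orbit in $\mathbb{C}^n$ if and only if $\overline{G_1(0)}=\mathbb{C}^n$.
   Context: $\mathcal{H}(n,\mathbb{C})$ is the group of all maps $z\mapsto\lambda z+b$ of $\mathbb{C}^n$ with $\lambda\in\mathbb{C}^*$, $b\in\mathbb{C}^n$ ($\lambda$ = ratio); $\mathcal{T}_n$ = subgroup of translations. $H_2=(\frac{\pi}{2}+\pi\mathbb{Z})\cup\pi\mathbb{Z}$, $F_2=\{e^{ix}:x\in H_2\}$, $H_3=(\frac{\pi}{3}+\pi\mathbb{Z})\cup(-\frac{\pi}{3}+\pi\mathbb{Z})\cup\pi\mathbb{Z}$, $F_3=\{e^{ix}:x\in H_3\}$; $\mathcal{S}_i\mathcal{R}_n=\{z\mapsto\lambda z+b:\lambda\in F_i, b\in\mathbb{C}^n\}$, $\mathcal{SR}_n=\mathcal{S}_2\mathcal{R}_n\cup\mathcal{S}_3\mathcal{R}_n$. For a subgroup $G$: $\Lambda_G$ is the set of ratios of elements of $G$; $G_1=G\cap\mathcal{T}_n$ and $G_1(0)=\{f(0):f\in G_1\}$. *)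

theory Defs
  imports "HOL-Analysis.Analysis"
begin

text \<open>C^n is modelled as complex ^ 'n (dimension n = CARD('n), arbitrary).
  The map z \<mapsto> lam z + b.\<close>
definition affmap :: "complex \<Rightarrow> complex ^ 'n \<Rightarrow> (complex ^ 'n \<Rightarrow> complex ^ 'n)" where
  "affmap lam b = (\<lambda>z. lam *s z + b)"

definition Hgrp :: "(complex ^ 'n \<Rightarrow> complex ^ 'n) set" where
  "Hgrp = {affmap lam b | lam b. lam \<noteq> 0}"

definition Transl :: "(complex ^ 'n \<Rightarrow> complex ^ 'n) set" where
  "Transl = {affmap 1 b | b. True}"

definition is_subgroup_H :: "(complex ^ 'n \<Rightarrow> complex ^ 'n) set \<Rightarrow> bool" where
  "is_subgroup_H G \<longleftrightarrow> G \<subseteq> Hgrp \<and> id \<in> G \<and> (\<forall>f\<in>G. \<forall>g\<in>G. f \<circ> g \<in> G) \<and> (\<forall>f\<in>G. inv f \<in> G)"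

definition non_abelian :: "(complex ^ 'n \<Rightarrow> complex ^ 'n) set \<Rightarrow> bool" where
  "non_abelian G \<longleftrightarrow> (\<exists>f\<in>G. \<exists>g\<in>G. f \<circ> g \<noteq> g \<circ> f)"

definition ratios :: "(complex ^ 'n \<Rightarrow> complex ^ 'n) set \<Rightarrow> complex set" where
  "ratios G = {lam. \<exists>b. affmap lam b \<in> G}"

definition H2 :: "real set" where
  "H2 = {pi/2 + pi * of_int k | k. True} \<union> {pi * of_int k | k. True}"
definition F2 :: "complex set" where
  "F2 = {exp (\<i> * of_real x) | x. x \<in> H2}"
definition H3 :: "real set" where
  "H3 = {pi/3 + pi * of_int k | k. True} \<union> {- pi/3 + pi * of_int k | k. True} \<union> {pi * of_int k | k. True}"
definition F3 :: "complex set" where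
  "F3 = {exp (\<i> * of_real x) | x. x \<in> H3}"

definition S2R :: "(complex ^ 'n \<Rightarrow> complex ^ 'n) set" where
  "S2R = {affmap lam b | lam b. lam \<in> F2}"
definition S3R :: "(complex ^ 'n \<Rightarrow> complex ^ 'n) set" where
  "S3R = {affmap lam b | lam b. lam \<in> F3}"
definition SR :: "(complex ^ 'n \<Rightarrow> complex ^ 'n) set" where
  "SR = S2R \<union> S3R"

definition G1 :: "(complex ^ 'n \<Rightarrow> complex ^ 'n) set \<Rightarrow> (complex ^ 'n \<Rightarrow> complex ^ 'n) set" where
  "G1 G = G \<inter> Transl"
definition G1_0 :: "(complex ^ 'n \<Rightarrow> complex ^ 'n) set \<Rightarrow> (complex ^ 'n) set" where
  "G1_0 G = {f 0 | f. f \<in> G1 G}"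

definition orbit :: "(complex ^ 'n \<Rightarrow> complex ^ 'n) set \<Rightarrow> complex ^ 'n \<Rightarrow> (complex ^ 'n) set" where
  "orbit G z = {f z | f. f \<in> G}"

definition has_dense_orbit :: "(complex ^ 'n \<Rightarrow> complex ^ 'n) set \<Rightarrow> bool" where
  "has_dense_orbit G \<longleftrightarrow> (\<exists>z. closure (orbit G z) = UNIV)"

end

theory Submission
  imports Defs
begin

lemma affmap_apply: "affmap l b z = l *s z + b"
  by (simp add: affmap_def)

lemma affmap_inj:
  assumes "affmap l b = (affmap m c :: complex ^ 'n \<Rightarrow> complex ^ 'n)"
  shows "l = m \<and> b = c"
proof -
  have bc: "b = c" using fun_cong[OF assms, of 0] by (simp add: affmap_def)
  have "affmap l b (\<chi> i. 1) $ undefined = affmap m c (\<chi> i. 1) $ (undefined::'n)"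
    using assms by simp
  then have "l = m" using bc by (simp add: affmap_def)
  with bc show ?thesis by simp
qed

lemma affmap_comp: "affmap l b \<circ> affmap m c = affmap (l*m) (l *s c + b)"
  by (rule ext) (simp add: affmap_def vector_add_ldistrib vector_smult_assoc vector_smult_rneg algebra_simps)

lemma affmap_id: "affmap 1 0 = id"
  by (rule ext) (simp add: affmap_def)

lemma inv_affmap:
  assumes "l \<noteq> 0"
  shows "inv (affmap l b) = affmap (1/l) (-((1/l) *s b))"
proof (rule inv_unique_comp)
  show "affmap l b \<circ> affmap (1/l) (-((1/l) *s b)) = id"
    using assms by (simp add: affmap_comp affmap_id[symmetric] vector_smult_assoc vector_smult_rneg)
  show "affmap (1/l) (-((1/l) *s b)) \<circ> affmap l b = id"
    using assms by (simp add: affmap_comp affmap_id[symmetric] vector_smult_assoc vector_smult_rneg)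
qed

lemma exp_int_pi: "exp (\<i> * of_real (2 * pi * of_int k)) = 1"
proof -
  have "exp ((2 * of_int k * of_real pi) * \<i>) = 1"
    using exp_integer_2pi[of "of_int k"] by simp
  moreover have "\<i> * of_real (2 * pi * of_int k) = (2 * of_int k * of_real pi) * \<i>"
    by simp
  ultimately show ?thesis by (simp add: mult_ac)
qed

lemma F_roots: "F2 \<union> F3 \<subseteq> {z::complex. z ^ 12 = 1}"
proof
  fix z assume "z \<in> F2 \<union> F3"
  then obtain x where z: "z = exp (\<i> * of_real x)" and x: "x \<in> H2 \<union> H3"
    unfolding F2_def F3_def by blast
  have "z ^ 12 = exp (\<i> * of_real (12 * x))"
    unfolding z by (simp add: exp_of_nat_mult[symmetric] algebra_simps)
  moreover obtain k :: int where "12 * x = 2 * pi * of_int k"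
  proof -
    from x consider (a) k where "x = pi/2 + pi * of_int k" | (b) k where "x = pi * of_int k"
      | (c) k where "x = pi/3 + pi * of_int k" | (d) k where "x = - pi/3 + pi * of_int k"
      unfolding H2_def H3_def by blast
    then show ?thesis
    proof cases
      case (a k) then show ?thesis using that[of "3 + 6*k"] by (simp add: algebra_simps)
    next
      case (b k) then show ?thesis using that[of "6*k"] by (simp add: algebra_simps)
    next
      case (c k) then show ?thesis using that[of "2 + 6*k"] by (simp add: algebra_simps)
    next
      case (d k) then show ?thesis using that[of "-2 + 6*k"] by (simp add: algebra_simps)
    qed
  qed
  ultimately show "z \<in> {z::complex. z ^ 12 = 1}" using exp_int_pi by simp
qed

lemma finite_F: "finite (F2 \<union> F3)"
  by (rule finite_subset[OF F_roots]) (rule finite_roots_unity, simp)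

theorem corollary1p2:
  fixes G :: "(complex ^ 'n \<Rightarrow> complex ^ 'n) set"
  assumes "is_subgroup_H G"
    and "non_abelian G"
    and "\<not> ratios G \<subseteq> \<real>"
    and "G \<subseteq> SR"
  shows "has_dense_orbit G \<longleftrightarrow> closure (G1_0 G) = UNIV"
proof
  have sg: "G \<subseteq> Hgrp" "id \<in> G" "\<And>f g. f \<in> G \<Longrightarrow> g \<in> G \<Longrightarrow> f \<circ> g \<in> G"
    "\<And>f. f \<in> G \<Longrightarrow> inv f \<in> G"
    using assms(1) unfolding is_subgroup_H_def by auto
  define A where "A = {b. affmap 1 b \<in> G}"
  have A_eq: "G1_0 G = A"
  proof (intro equalityI subsetI)
    fix x assume "x \<in> G1_0 G"
    then obtain b where "affmap 1 b \<in> G" "x = affmap 1 b 0"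
      unfolding G1_0_def G1_def Transl_def by blast
    then show "x \<in> A" unfolding A_def by (simp add: affmap_apply)
  next
    fix x assume "x \<in> A"
    then have "affmap 1 x \<in> G1 G" "x = affmap 1 x 0"
      unfolding A_def G1_def Transl_def by (auto simp: affmap_apply)
    then show "x \<in> G1_0 G" unfolding G1_0_def by blast
  qed
  define H where "H = closure A"
  have A0: "0 \<in> A" using sg(2) by (simp add: A_def affmap_id)
  have Aadd: "a + b \<in> A" if "a \<in> A" "b \<in> A" for a b
    using sg(3)[of "affmap 1 a" "affmap 1 b"] that by (simp add: A_def affmap_comp add.commute)
  have Aneg: "-a \<in> A" if "a \<in> A" for a
    using sg(4)[of "affmap 1 a"] that by (simp add: A_def inv_affmap)
  have H0: "0 \<in> H" using A0 closure_subset H_def by blast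
  have AH: "(+) a ` H \<subseteq> H" if "a \<in> A" for a
  proof -
    have "(+) a ` A \<subseteq> A" using Aadd that by auto
    then have "closure ((+) a ` A) \<subseteq> H" unfolding H_def by (rule closure_mono)
    then show ?thesis unfolding H_def closure_translation .
  qed
  have HH: "(+) h ` H \<subseteq> H" if "h \<in> H" for h
  proof -
    have "(+) h ` A \<subseteq> H" using AH that by (force simp: add.commute)
    then have "closure ((+) h ` A) \<subseteq> H" unfolding H_def
      by (metis closed_closure closure_minimal)
    then show ?thesis unfolding H_def closure_translation .
  qed
  have Hneg: "-h \<in> H" if "h \<in> H" for h
  proof -
    have "((*\<^sub>R) (-1)) ` A \<subseteq> A" using Aneg by auto
    then have "closure (((*\<^sub>R) (-1)) ` A) \<subseteq> H" unfolding H_def by (rule closure_mono)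
    then have "((*\<^sub>R) (-1)) ` H \<subseteq> H" unfolding H_def closure_scaleR .
    then have "(-1) *\<^sub>R h \<in> H" using that by blast
    then show ?thesis by simp
  qed
  have Hadd: "h + k \<in> H" if "h \<in> H" "k \<in> H" for h k
    using HH[OF that(1)] that(2) by blast
  show "closure (G1_0 G) = UNIV" if "has_dense_orbit G"
  proof -
    from that obtain z where z: "closure (orbit G z) = UNIV"
      unfolding has_dense_orbit_def by blast
    define L where "L = ratios G"
    have LF: "L \<subseteq> F2 \<union> F3"
    proof
      fix l assume "l \<in> L"
      then obtain b where "affmap l b \<in> G" unfolding L_def ratios_def by blast
      then have "affmap l b \<in> SR" using assms(4) by blast
      then obtain m c where "affmap l b = affmap m c" "m \<in> F2 \<union> F3"
        unfolding SR_def S2R_def S3R_def by blast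
      then show "l \<in> F2 \<union> F3" using affmap_inj by metis
    qed
    have finL: "finite L" using finite_subset[OF LF finite_F] .
    define bs where "bs = (\<lambda>l. SOME b. affmap l b \<in> G)"
    have bs: "affmap l (bs l) \<in> G" if "l \<in> L" for l
      using that unfolding L_def ratios_def bs_def by (metis (mono_tags, lifting) mem_Collect_eq someI)
    define P where "P = (\<lambda>l. l *s z + bs l) ` L"
    have finP: "finite P" unfolding P_def using finL by simp
    have orb: "orbit G z \<subseteq> (\<Union>p\<in>P. (+) p ` H)"
    proof
      fix w assume "w \<in> orbit G z"
      then obtain g where g: "g \<in> G" "w = g z" unfolding orbit_def by blast
      then obtain l c where gl: "g = affmap l c" "l \<noteq> 0" using sg(1) unfolding Hgrp_def by blast
      have lL: "l \<in> L" using g gl unfolding L_def ratios_def by blast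
      have "g \<circ> inv (affmap l (bs l)) \<in> G" using sg(3,4) g(1) bs[OF lL] by blast
      moreover have "g \<circ> inv (affmap l (bs l)) = affmap 1 (c - bs l)"
      proof -
        have e1: "l * (1/l) = 1" using gl(2) by simp
        have e2: "l *s (-((1/l) *s bs l)) + c = c - bs l"
          by (simp only: vector_smult_rneg vector_smult_assoc e1) simp
        show ?thesis unfolding gl(1) inv_affmap[OF gl(2)] affmap_comp e1 e2 ..
      qed
      ultimately have "c - bs l \<in> A" unfolding A_def by simp
      then have "c - bs l \<in> H" unfolding H_def using closure_subset by blast
      moreover have "w = (l *s z + bs l) + (c - bs l)" using g gl by (simp add: affmap_def)
      moreover have "l *s z + bs l \<in> P" using lL unfolding P_def by blast
      ultimately show "w \<in> (\<Union>p\<in>P. (+) p ` H)" by blast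
    qed
    have clP: "closed (\<Union>p\<in>P. (+) p ` H)"
      using finP by (intro closed_UN) (auto simp: H_def closed_translation)
    have cover: "(\<Union>p\<in>P. (+) p ` H) = UNIV"
      using closure_minimal[OF orb clP] z by blast
    define Q where "Q = {p\<in>P. p \<notin> H}"
    have compl: "- H = (\<Union>p\<in>Q. (+) p ` H)"
    proof (intro equalityI subsetI)
      fix x assume "x \<in> - H"
      moreover obtain p h where "p \<in> P" "h \<in> H" "x = p + h" using cover by blast
      ultimately show "x \<in> (\<Union>p\<in>Q. (+) p ` H)"
        using Hadd unfolding Q_def by fastforce
    next
      fix x assume "x \<in> (\<Union>p\<in>Q. (+) p ` H)"
      then obtain p h where ph: "p \<in> P" "p \<notin> H" "h \<in> H" "x = p + h" unfolding Q_def by blast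
      show "x \<in> - H"
      proof
        assume "x \<in> H"
        then have "x + - h \<in> H" using Hadd Hneg ph(3) by blast
        then show False using ph by simp
      qed
    qed
    have "closed (- H)" unfolding compl using finP
      by (intro closed_UN) (auto simp: Q_def H_def closed_translation)
    then have "open H" by (simp add: open_closed)
    moreover have "closed H" unfolding H_def by simp
    ultimately have "H = UNIV" using clopen H0 by blast
    then show ?thesis using A_eq H_def by simp
  qed
  show "has_dense_orbit G" if "closure (G1_0 G) = UNIV"
  proof -
    have "G1_0 G \<subseteq> orbit G 0" unfolding G1_0_def G1_def orbit_def by blast
    then have "closure (orbit G 0) = UNIV" using closure_mono that by blast
    then show ?thesis unfolding has_dense_orbit_def by blast
  qed
qed

end
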